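(* For all integers $q\ge1$ and $t\ge1$, $\mathsf{DEL}_{\mathrm{cor}}(q,t)\le \mathsf{INS}_{\mathrm{cor}}(q,t)$.
   Context: Let $[q]=\{0,1,\dots,q-1\}$. For $1\le m\le q$, a partial permutation of length $m$ over $[q]$ is a sequence of $m$ pairwise distinct elements of $[q]$. Let $\mathcal{S}_m^q$ be the set of those of length $m$ and $\mathcal{S}_{\mathrm{all}}^q=\bigcup_{m=1}^{q}\mathcal{S}_m^q$. A code is any subset of $\mathcal{S}_{\mathrm{all}}^q$. Juxtaposition $\omega\pi$ denotes concatenation with $\omega$ on the left. For $\pi=(\pi_1,\dots,\pi_m)$ and integer $j\ge 0$, $\pi_{\downarrow j}=(\pi_{k+1},\dots,\pi_m)$ with $k=\min(j,m-1)$; $\mathcal{B}_{\mathrm{del}}^t(\pi)=\{\pi_{\downarrow j}:0\le j\le t\}$. $\mathcal{B}_{\mathrm{ins}}^t(\pi)$ is the set of all $\omega\pi\in\mathcal{S}_{\mathrm{all}}^q$ with $\omega$ a (possibly empty) sequence of at most $t$ elements of $[q]$. For $X\in\{\mathrm{del},\mathrm{ins}\}$, a code $\mathcal{C}$ is $t$-tail-$X$-correcting if $\mathcal{B}_X^t(\pi_1)\cap\mathcal{B}_X^t(\pi_2)=\emptyset$ for all distinct $\pi_1,\pi_2\in\mathcal{C}$. $\mathsf{DEL}_{\mathrm{cor}}(q,t)$ and $\mathsf{INS}_{\mathrm{cor}}(q,t)$ denote the maximum sizes of $t$-tail-deletion-correcting and $t$-tail-insertion-correcting codes in $\mathcal{S}_{\mathrm{all}}^q$.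 *)

theory Defs
  imports Main
begin

definition S_all :: "nat \<Rightarrow> nat list set" where
  "S_all q = {p. distinct p \<and> set p \<subseteq> {..<q} \<and> 1 \<le> length p \<and> length p \<le> q}"

definition tail_del :: "nat list \<Rightarrow> nat \<Rightarrow> nat list" where
  "tail_del p j = drop (min j (length p - 1)) p"

definition B_del :: "nat \<Rightarrow> nat list \<Rightarrow> nat list set" where
  "B_del t p = {tail_del p j | j. j \<le> t}"

definition B_ins :: "nat \<Rightarrow> nat \<Rightarrow> nat list \<Rightarrow> nat list set" where
  "B_ins q t p = {w @ p | w. length w \<le> t \<and> set w \<subseteq> {..<q} \<and> w @ p \<in> S_all q}"

definition del_correcting :: "nat \<Rightarrow> nat \<Rightarrow> nat list set \<Rightarrow> bool" where
  "del_correcting q t C \<longleftrightarrow> C \<subseteq> S_all q \<and>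
     (\<forall>p1\<in>C. \<forall>p2\<in>C. p1 \<noteq> p2 \<longrightarrow> B_del t p1 \<inter> B_del t p2 = {})"

definition ins_correcting :: "nat \<Rightarrow> nat \<Rightarrow> nat list set \<Rightarrow> bool" where
  "ins_correcting q t C \<longleftrightarrow> C \<subseteq> S_all q \<and>
     (\<forall>p1\<in>C. \<forall>p2\<in>C. p1 \<noteq> p2 \<longrightarrow> B_ins q t p1 \<inter> B_ins q t p2 = {})"

definition DEL_cor :: "nat \<Rightarrow> nat \<Rightarrow> nat" where
  "DEL_cor q t = Max {card C | C. del_correcting q t C}"

definition INS_cor :: "nat \<Rightarrow> nat \<Rightarrow> nat" where
  "INS_cor q t = Max {card C | C. ins_correcting q t C}"

end

theory Submission
  imports Defs
begin

lemma aux: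
  assumes "p1 \<in> S_all q" "p2 \<in> S_all q" "w1 @ p1 = w2 @ p2"
    "length w1 \<le> t" "length p1 \<le> length p2"
  shows "B_del t p1 \<inter> B_del t p2 \<noteq> {}"
proof -
  define k where "k = length p2 - length p1"
  have l1: "length p1 \<ge> 1" using assms(1) by (simp add: S_all_def)
  have "length (w1 @ p1) = length (w2 @ p2)" using assms(3) by simp
  hence lw: "length w1 = length w2 + k" using assms(5) by (simp add: k_def)
  have "drop k p2 = p1"
  proof -
    have "drop (length w2 + k) (w2 @ p2) = drop (length w1) (w1 @ p1)" using assms(3) lw by simp
    thus ?thesis by simp
  qed
  moreover have "k \<le> t" using lw assms(4) by simp
  moreover have "k \<le> length p2 - 1" using l1 by (simp add: k_def)
  ultimately have "p1 \<in> B_del t p2" unfolding B_del_def tail_del_def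
    by (auto intro!: exI[of _ k] simp: min_def)
  moreover have "p1 \<in> B_del t p1" unfolding B_del_def tail_del_def
    by (auto intro!: exI[of _ 0])
  ultimately show ?thesis by blast
qed

lemma del_ins:
  assumes "del_correcting q t C" shows "ins_correcting q t C"
  unfolding ins_correcting_def
proof (intro conjI ballI impI)
  show "C \<subseteq> S_all q" using assms by (simp add: del_correcting_def)
next
  fix p1 p2 assume p: "p1 \<in> C" "p2 \<in> C" "p1 \<noteq> p2"
  have s: "p1 \<in> S_all q" "p2 \<in> S_all q" using assms p by (auto simp: del_correcting_def)
  have d: "B_del t p1 \<inter> B_del t p2 = {}" using assms p by (auto simp: del_correcting_def)
  show "B_ins q t p1 \<inter> B_ins q t p2 = {}"
  proof (rule ccontr)
    assume "B_ins q t p1 \<inter> B_ins q t p2 \<noteq> {}"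
    then obtain w1 w2 where w: "w1 @ p1 = w2 @ p2" "length w1 \<le> t" "length w2 \<le> t"
      unfolding B_ins_def by auto
    show False
    proof (cases "length p1 \<le> length p2")
      case True thus False using aux[OF s w(1) w(2)] d by blast
    next
      case False thus False using aux[OF s(2) s(1) w(1)[symmetric] w(3)] d by auto
    qed
  qed
qed

lemma fin_S: "finite (S_all q)"
proof -
  have "S_all q \<subseteq> {xs. set xs \<subseteq> {..<q} \<and> length xs \<le> q}" by (auto simp: S_all_def)
  thus ?thesis using finite_lists_length_le[of "{..<q}" q] finite_subset by blast
qed

theorem mainTheorem5:
  fixes q t :: nat
  assumes "q \<ge> 1" and "t \<ge> 1"
  shows "DEL_cor q t \<le> INS_cor q t"
proof -
  have sub: "{card C | C. del_correcting q t C} \<subseteq> {card C | C. ins_correcting q t C}"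
    using del_ins by blast
  have ne: "{card C | C. del_correcting q t C} \<noteq> {}"
    by (auto simp: del_correcting_def intro!: exI[of _ "{}"])
  have "{card C | C. ins_correcting q t C} \<subseteq> card ` Pow (S_all q)"
    by (auto simp: ins_correcting_def)
  hence fin: "finite {card C | C. ins_correcting q t C}"
    using fin_S finite_subset by blast
  show ?thesis unfolding DEL_cor_def INS_cor_def using Max_mono[OF sub ne fin] .
qed

end
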